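(* For every integer $n\ge1$: $$\beta(n)^2=\sum_{dk=n}d\,2^{\omega(d)}\lambda(d)\,\sigma_2(k),\qquad \beta(n^2)=\sum_{dk=n}d\,\mu(d)\,\sigma_2(k),\qquad \beta(n)\sigma(n)=\sum_{d^2k=n}d^2\,2^{\omega(d)}\beta_2(k),$$ where the sums run over pairs of positive integers $(d,k)$ with the indicated product equal to $n$.
   Context: $\lambda$ is the Liouville function, $\mu$ the Möbius function, $\omega(n)$ the number of distinct prime factors of $n$. $\beta(n)=\sum_{d\mid n}d\,\lambda(n/d)$, $\beta_2(n)=\sum_{d\mid n}d^2\lambda(n/d)$, $\sigma(n)=\sum_{d\mid n}d$, $\sigma_2(n)=\sum_{d\mid n}d^2$. *)

theory Defs
  imports "HOL-Computational_Algebra.Computational_Algebra"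
begin

definition liouville :: "nat \<Rightarrow> int" where
  "liouville n = (-1) ^ size (prime_factorization n)"

definition moebius :: "nat \<Rightarrow> int" where
  "moebius n = (if squarefree n then (-1) ^ card (prime_factors n) else 0)"

definition omega :: "nat \<Rightarrow> nat" where
  "omega n = card (prime_factors n)"

definition beta :: "nat \<Rightarrow> int" where
  "beta n = (\<Sum>d | d dvd n. int d * liouville (n div d))"

definition beta2 :: "nat \<Rightarrow> int" where
  "beta2 n = (\<Sum>d | d dvd n. int d ^ 2 * liouville (n div d))"

definition sigma1 :: "nat \<Rightarrow> int" where
  "sigma1 n = (\<Sum>d | d dvd n. int d)"

definition sigma2 :: "nat \<Rightarrow> int" where
  "sigma2 n = (\<Sum>d | d dvd n. int d ^ 2)"

end

theory Submission
  imports Defs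
begin


definition multf :: "(nat \<Rightarrow> int) \<Rightarrow> bool" where
 "multf f \<longleftrightarrow> f 1 = 1 \<and> (\<forall>a b. a > 0 \<longrightarrow> b > 0 \<longrightarrow> coprime a b \<longrightarrow> f (a*b) = f a * f b)"

definition dconv :: "nat \<Rightarrow> (nat\<Rightarrow>int) \<Rightarrow> (nat\<Rightarrow>int) \<Rightarrow> nat \<Rightarrow> int" where
 "dconv j f g n = (\<Sum>d | d ^ j dvd n. f d * g (n div d ^ j))"

lemma gcd_coprime_split:
  fixes a b d :: nat
  assumes "coprime a b" "d dvd a * b"
  shows "d = gcd d a * gcd d b"
  using assms by (smt (verit, ccfv_threshold) coprime_mult_right_iff division_decomp
    dvd_mult_div_cancel gcd.commute gcd_mult_left_right_cancel
    gcd_nat.order_iff is_unit_gcd mult.commute)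

lemma finite_pow_dvd: "j > 0 \<Longrightarrow> n > 0 \<Longrightarrow> finite {d::nat. d ^ j dvd n}"
proof -
  assume "j > 0" "n > 0"
  have "{d::nat. d ^ j dvd n} \<subseteq> {..n}"
  proof
    fix d assume "d \<in> {d::nat. d ^ j dvd n}"
    then have "d ^ j dvd n" by simp
    moreover have "d dvd d ^ j" using \<open>j>0\<close> by (simp add: dvd_power)
    ultimately have "d dvd n" by (rule dvd_trans[rotated])
    then show "d \<in> {..n}" using \<open>n>0\<close> by (simp add: dvd_imp_le)
  qed
  then show ?thesis by (rule finite_subset) simp
qed

lemma pow_dvd_imp_dvd: "j > 0 \<Longrightarrow> (d::nat) ^ j dvd n \<Longrightarrow> d dvd n"
  by (meson dvd_power dvd_trans)

lemma multfD: "multf f \<Longrightarrow> a > 0 \<Longrightarrow> b > 0 \<Longrightarrow> coprime a b \<Longrightarrow> f (a*b) = f a * f b"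
  unfolding multf_def by blast

lemma multf1: "multf f \<Longrightarrow> f 1 = 1"
  unfolding multf_def by blast

lemma dconv_mult:
  assumes j: "j > 0" and f: "multf f" and g: "multf g"
  shows "multf (dconv j f g)"
  unfolding multf_def
proof (intro conjI allI impI)
  have "{d::nat. d ^ j dvd 1} = {1}" using j by auto
  then show "dconv j f g 1 = 1" using f g unfolding dconv_def multf_def by simp
next
  fix a b :: nat assume a: "a > 0" and b: "b > 0" and ab: "coprime a b"
  define A where "A = {d::nat. d ^ j dvd a}"
  define B where "B = {d::nat. d ^ j dvd b}"
  define C where "C = {d::nat. d ^ j dvd a * b}"
  have bij: "bij_betw (\<lambda>(x,y). x*y) (A \<times> B) C"
  proof (rule bij_betw_imageI)
    show "inj_on (\<lambda>(x,y). x*y) (A \<times> B)"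
    proof (rule inj_onI)
      fix u v assume u: "u \<in> A \<times> B" and v: "v \<in> A \<times> B"
        and e: "(\<lambda>(x,y). x*y) u = (\<lambda>(x,y). x*y) v"
      obtain x y where uu: "u = (x,y)" by (cases u)
      obtain x' y' where vv: "v = (x',y')" by (cases v)
      have xy: "(x,y) \<in> A \<times> B" "(x',y') \<in> A \<times> B" using u v uu vv by auto
      have eq: "x*y = x'*y'" using e uu vv by simp
      have xa: "x dvd a" "x' dvd a" "y dvd b" "y' dvd b" using xy j pow_dvd_imp_dvd
        unfolding A_def B_def by auto
      have cy: "coprime a y" "coprime a y'" "coprime b x" "coprime b x'"
        using coprime_divisors[OF dvd_refl xa(3) ab] coprime_divisors[OF dvd_refl xa(4) ab]
          coprime_divisors[OF dvd_refl xa(1) ab[unfolded coprime_commute[of a b]]]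
          coprime_divisors[OF dvd_refl xa(2) ab[unfolded coprime_commute[of a b]]] by auto
      have "x = gcd (x*y) a" using cy xa by (simp add: gcd_mult_left_right_cancel gcd_nat.absorb1)
      also have "\<dots> = gcd (x'*y') a" using eq by simp
      also have "\<dots> = x'" using cy xa by (simp add: gcd_mult_left_right_cancel gcd_nat.absorb1)
      finally have "x = x'" .
      have "y = gcd (x*y) b" using cy xa by (simp add: gcd.commute[of _ b] gcd_mult_right_left_cancel gcd_nat.absorb2)
      also have "\<dots> = gcd (x'*y') b" using eq by simp
      also have "\<dots> = y'" using cy xa by (simp add: gcd.commute[of _ b] gcd_mult_right_left_cancel gcd_nat.absorb2)
      finally show "u = v" using \<open>x = x'\<close> uu vv by simp
    qed
    show "(\<lambda>(x,y). x*y) ` (A \<times> B) = C"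
    proof
      show "(\<lambda>(x,y). x*y) ` (A \<times> B) \<subseteq> C"
        unfolding A_def B_def C_def by (auto simp: power_mult_distrib mult_dvd_mono)
      show "C \<subseteq> (\<lambda>(x,y). x*y) ` (A \<times> B)"
      proof
        fix d assume "d \<in> C"
        then have dj: "d ^ j dvd a * b" unfolding C_def by simp
        then have "d dvd a * b" using j pow_dvd_imp_dvd by blast
        then have dsplit: "d = gcd d a * gcd d b" using ab gcd_coprime_split by blast
        have x1: "gcd d a ^ j dvd a * b" using dj dvd_power_same[of "gcd d a" d j] dvd_trans by auto
        have "coprime (gcd d a) b" using coprime_divisors[OF gcd_dvd2 dvd_refl ab] .
        then have "gcd d a ^ j dvd a" using x1 by (simp add: coprime_dvd_mult_left_iff)
        moreover
        have x2: "gcd d b ^ j dvd a * b" using dj dvd_power_same[of "gcd d b" d j] dvd_trans by auto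
        have "coprime (gcd d b) a" using coprime_divisors[OF gcd_dvd2 dvd_refl ab[unfolded coprime_commute[of a b]]] .
        then have "gcd d b ^ j dvd b" using x2 by (simp add: coprime_dvd_mult_right_iff)
        ultimately show "d \<in> (\<lambda>(x,y). x*y) ` (A \<times> B)" unfolding A_def B_def
          using dsplit by (intro image_eqI[of _ _ "(gcd d a, gcd d b)"]) auto
      qed
    qed
  qed
  have fA: "finite A" "finite B" using a b j finite_pow_dvd unfolding A_def B_def by auto
  have key: "f (x*y) * g (a * b div (x*y) ^ j) = (f x * g (a div x ^ j)) * (f y * g (b div y ^ j))"
    if "x \<in> A" "y \<in> B" for x y
  proof -
    have xa: "x ^ j dvd a" "y ^ j dvd b" using that unfolding A_def B_def by auto
    have xd: "x dvd a" "y dvd b" using xa j pow_dvd_imp_dvd by blast+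
    have pos: "x > 0" "y > 0" using xd a b by (intro gr0I; auto)+
    have cxy: "coprime x y" using coprime_divisors[OF xd ab] .
    have e1: "a * b div (x*y) ^ j = (a div x ^ j) * (b div y ^ j)"
      using xa by (simp add: power_mult_distrib div_mult_div_if_dvd)
    have q: "a div x ^ j > 0" "b div y ^ j > 0"
      using dvd_div_eq_0_iff[OF xa(1)] dvd_div_eq_0_iff[OF xa(2)] a b by simp_all
    have dd: "a div x ^ j dvd a" "b div y ^ j dvd b" using xa by (metis dvd_div_mult_self dvd_triv_left)+
    have cq: "coprime (a div x ^ j) (b div y ^ j)" using coprime_divisors[OF dd ab] .
    show ?thesis using e1 multfD[OF f pos cxy] multfD[OF g q cq] by simp
  qed
  have "dconv j f g (a*b) = (\<Sum>d\<in>C. f d * g (a * b div d ^ j))" unfolding dconv_def C_def by simp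
  also have "\<dots> = (\<Sum>(x,y)\<in>A \<times> B. f (x*y) * g (a * b div (x*y) ^ j))"
    using sum.reindex_bij_betw[OF bij, symmetric] by (simp add: case_prod_unfold)
  also have "\<dots> = (\<Sum>(x,y)\<in>A \<times> B. (f x * g (a div x ^ j)) * (f y * g (b div y ^ j)))"
    using key by (intro sum.cong) auto
  also have "\<dots> = (\<Sum>x\<in>A. f x * g (a div x ^ j)) * (\<Sum>y\<in>B. f y * g (b div y ^ j))"
    by (simp add: sum_product sum.cartesian_product)
  also have "\<dots> = dconv j f g a * dconv j f g b" unfolding dconv_def A_def B_def by simp
  finally show "dconv j f g (a*b) = dconv j f g a * dconv j f g b" .
qed



lemma sum_rev_step:
  fixes F :: "nat \<Rightarrow> int"
  shows "(\<Sum>i\<le>Suc k. F i * a ^ (Suc k - i)) = F (Suc k) + a * (\<Sum>i\<le>k. F i * a ^ (k - i))"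
proof -
  have "(\<Sum>i\<le>k. F i * a ^ (Suc k - i)) = (\<Sum>i\<le>k. a * (F i * a ^ (k - i)))"
    by (intro sum.cong refl) (simp add: Suc_diff_le)
  then show ?thesis by (simp add: sum_distrib_left)
qed

lemma sum_c2:
  fixes h :: "nat \<Rightarrow> int"
  shows "(\<Sum>i\<le>m. (if i = 0 then 1 else 2) * h i) = 2 * (\<Sum>i\<le>m. h i) - h 0"
  by (induction m) (simp_all add: algebra_simps)

definition Bt :: "int \<Rightarrow> nat \<Rightarrow> int" where "Bt x k = (\<Sum>i\<le>k. x ^ i * (-1) ^ (k - i))"
definition S2 :: "int \<Rightarrow> nat \<Rightarrow> int" where "S2 x k = (\<Sum>i\<le>k. x ^ (2*i))"
definition S1 :: "int \<Rightarrow> nat \<Rightarrow> int" where "S1 x k = (\<Sum>i\<le>k. x ^ i)"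
definition B2 :: "int \<Rightarrow> nat \<Rightarrow> int" where "B2 x k = (\<Sum>i\<le>k. x ^ (2*i) * (-1) ^ (k - i))"

lemma Bt_closed: "(x + 1) * Bt x k = x ^ (k+1) + (-1) ^ k"
proof (induction k)
  case 0 then show ?case by (simp add: Bt_def)
next
  case (Suc k)
  have "Bt x (Suc k) = x ^ Suc k - Bt x k"
    unfolding Bt_def using sum_rev_step[where F="\<lambda>i. x ^ i" and k=k and a="-1"] by simp
  then show ?case using Suc by (simp only:) (simp add: algebra_simps)
qed

lemma S2_closed: "(x^2 - 1) * S2 x k = x ^ (2*k+2) - 1"
proof (induction k)
  case 0 then show ?case by (simp add: S2_def power2_eq_square)
next
  case (Suc k)
  have "S2 x (Suc k) = S2 x k + x ^ (2 * k + 2)" unfolding S2_def by simp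
  moreover have "x ^ (2 * Suc k + 2) = x ^ (2 * k + 2) * x^2" by (simp add: power_add power2_eq_square)
  ultimately show ?case using Suc by (simp only:) (simp add: algebra_simps)
qed

lemma S1_closed: "(x - 1) * S1 x k = x ^ (k+1) - 1"
proof (induction k)
  case 0 then show ?case by (simp add: S1_def)
next
  case (Suc k)
  have "S1 x (Suc k) = S1 x k + x ^ (Suc k)" unfolding S1_def by simp
  then show ?case using Suc by (simp add: algebra_simps)
qed

lemma B2_closed: "(x^2 + 1) * B2 x k = x ^ (2*k+2) + (-1) ^ k"
proof (induction k)
  case 0 then show ?case by (simp add: B2_def power2_eq_square)
next
  case (Suc k)
  have "B2 x (Suc k) = x ^ (2 * Suc k) - B2 x k"
    unfolding B2_def using sum_rev_step[where F="\<lambda>i. x ^ (2*i)" and k=k and a="-1"] by simp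
  moreover have "x ^ (2 * Suc k + 2) = x ^ (2 * k + 2) * x^2" "x ^ (2 * Suc k) = x ^ (2 * k + 2)" by (simp_all add: power_add power2_eq_square)
  ultimately show ?case using Suc by (simp only:) (simp add: algebra_simps)
qed


lemma key1_alg:
  fixes x y b s S S' :: int
  assumes "(x+1)*b = y + s" "s^2 = 1" "(x^2-1)*S = y^2-1" "(x^2-1)*S' = x^2*y^2-1"
  shows "(x+1)^2*(x^2-1)*((y-b)^2 - S' + x*S + x*b^2) = 0"
  using assms by algebra

lemma cancel_nz:
  fixes x :: int
  assumes "x \<ge> 2" "(x+1)^2*(x^2-1)*E = 0"
  shows "E = 0"
proof -
  have "(x+1)^2 \<noteq> 0" using assms(1) by simp
  moreover have "x^2 - 1 \<noteq> 0"
  proof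
    assume "x^2 - 1 = 0"
    then have "x^2 = 1^2" by simp
    then have "\<bar>x\<bar> = 1" using power2_eq_iff by fastforce
    then show False using assms(1) by simp
  qed
  ultimately show ?thesis using assms(2) by simp
qed

lemma x2_ne: "(x::int) \<ge> 2 \<Longrightarrow> x^2 - 1 \<noteq> 0"
  using cancel_nz[of x 1] by auto

lemma key1:
  assumes "x \<ge> 2"
  shows "Bt x (Suc k) ^ 2 = S2 x (Suc k) - x * S2 x k - x * Bt x k ^ 2"
proof -
  define y where "y = x ^ (k+1)"
  have e1: "Bt x (Suc k) = y - Bt x k"
    unfolding Bt_def y_def using sum_rev_step[where F="\<lambda>i. x ^ i" and k=k and a="-1"] by simp
  have h1: "(x+1)*Bt x k = y + (-1)^k" using Bt_closed unfolding y_def .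
  have h2: "((-1::int)^k)^2 = 1" by (simp flip: power_mult add: mult.commute[of k])
  have yy: "x^(2*k+2) = y^2" unfolding y_def
    by (simp only: power_mult[symmetric]) (simp add: mult.commute)
  have yy2: "x^(2*Suc k+2) = x^2*y^2" unfolding yy[symmetric]
    by (simp only: power_add[symmetric]) simp
  have h3: "(x^2-1)*S2 x k = y^2 - 1" using S2_closed[of x k] unfolding yy .
  have h4: "(x^2-1)*S2 x (Suc k) = x^2*y^2 - 1" using S2_closed[of x "Suc k"] unfolding yy2 .
  have "(x+1)^2*(x^2-1)*((y-Bt x k)^2 - S2 x (Suc k) + x*S2 x k + x*Bt x k^2) = 0"
    by (rule key1_alg[OF h1 h2 h3 h4])
  then have "(y-Bt x k)^2 - S2 x (Suc k) + x*S2 x k + x*Bt x k^2 = 0" using cancel_nz[OF assms] by blast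
  then show ?thesis unfolding e1 by linarith
qed

definition U :: "int \<Rightarrow> nat \<Rightarrow> int" where "U x k = (\<Sum>i\<le>k. x ^ i * (-1) ^ i * S2 x (k - i))"

lemma U_Suc: "U x (Suc k) = S2 x (Suc k) - x * U x k"
proof -
  have "U x (Suc k) = S2 x (Suc k) + (\<Sum>i\<le>k. x ^ Suc i * (-1) ^ Suc i * S2 x (k - i))"
    unfolding U_def by (subst sum.atMost_Suc_shift) simp
  also have "(\<Sum>i\<le>k. x ^ Suc i * (-1) ^ Suc i * S2 x (k - i)) = - x * U x k"
    unfolding U_def sum_distrib_left by (intro sum.cong refl) simp
  finally show ?thesis by simp
qed

lemma U_Bt: "x \<ge> 2 \<Longrightarrow> 2 * U x k - S2 x k = Bt x k ^ 2"
proof (induction k)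
  case 0 then show ?case by (simp add: U_def S2_def Bt_def)
next
  case (Suc k)
  have "2 * U x (Suc k) - S2 x (Suc k) = S2 x (Suc k) - x*(2*U x k)" using U_Suc[of x k] by simp
  also have "\<dots> = S2 x (Suc k) - x*(S2 x k + Bt x k^2)" using Suc.IH[OF Suc.prems] by simp
  also have "\<dots> = Bt x (Suc k)^2" using key1[OF Suc.prems, of k] by (simp add: algebra_simps)
  finally show ?case .
qed

theorem ident1:
  assumes "x \<ge> 2"
  shows "(\<Sum>i\<le>k. (if i=0 then 1 else 2) * (x^i * (-1)^i * S2 x (k-i))) = Bt x k ^ 2"
  using sum_c2[where m=k and h="\<lambda>i. x^i * (-1)^i * S2 x (k-i)"] U_Bt[OF assms, of k] unfolding U_def by simp

lemma key2_alg:
  fixes x z B S S' :: int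
  assumes "(x+1)*B = x*z + 1" "(x^2-1)*S' = x^2*z-1" "(x^2-1)*S = z-1"
  shows "(x+1)^2*(x^2-1)*(B - S' + x*S) = 0"
  using assms by algebra

theorem ident2:
  assumes "x \<ge> 2"
  shows "Bt x (2 * Suc m) = S2 x (Suc m) - x * S2 x m"
proof -
  define z where "z = x ^ (2*m+2)"
  have h1: "(x+1)*Bt x (2 * Suc m) = x*z + 1" using Bt_closed[of x "2 * Suc m"] unfolding z_def
    by (simp add: power_mult[symmetric] mult.commute)
  have h2: "(x^2-1)*S2 x (Suc m) = x^2*z - 1" using S2_closed[of x "Suc m"] unfolding z_def
    by (simp add: power_add[symmetric] mult.commute)
  have h3: "(x^2-1)*S2 x m = z - 1" using S2_closed[of x m] unfolding z_def .
  have "Bt x (2 * Suc m) - S2 x (Suc m) + x * S2 x m = 0"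
    using cancel_nz[OF assms key2_alg[OF h1 h2 h3]] .
  then show ?thesis by linarith
qed


lemma key3_alg:
  fixes x y s b b' c c' d d' :: int
  assumes "(x+1)*b = y + s" "(x+1)*b' = x^2*y + s" "(x-1)*c = y - 1" "(x-1)*c' = x^2*y - 1"
    "(x^2+1)*d = y^2 + s" "(x^2+1)*d' = x^4*y^2 + s"
  shows "(x+1)*(x-1)*(x^2+1)*(b'*c' - d' - x^2*d - x^2*(b*c)) = 0"
  using assms by algebra

lemma key3:
  assumes "x \<ge> 2"
  shows "Bt x (k+2) * S1 x (k+2) = B2 x (k+2) + x^2 * B2 x k + x^2 * (Bt x k * S1 x k)"
proof -
  define y where "y = x ^ (k+1)"
  define s where "s = ((-1::int)^k)"
  have yy: "x^(2*k+2) = y^2" unfolding y_def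
    by (simp only: power_mult[symmetric]) (simp add: mult.commute)
  have ee: "2*(k+2)+2 = 4 + (2*k+2)" by simp
  have yy2: "x^(2*(k+2)+2) = x^4*y^2" unfolding yy[symmetric] ee by (simp only: power_add)
  have y3: "x^(k+2+1) = x^2*y" unfolding y_def by (simp only: power_add[symmetric]) simp
  have s2: "(-1::int)^(k+2) = s" unfolding s_def by simp
  have h1: "(x+1)*Bt x k = y + s" using Bt_closed unfolding y_def s_def .
  have h2: "(x+1)*Bt x (k+2) = x^2*y + s" using Bt_closed[of x "k+2"] unfolding y3 s2 .
  have h3: "(x-1)*S1 x k = y - 1" using S1_closed unfolding y_def .
  have h4: "(x-1)*S1 x (k+2) = x^2*y - 1" using S1_closed[of x "k+2"] unfolding y3 .
  have h5: "(x^2+1)*B2 x k = y^2 + s" using B2_closed[of x k] unfolding yy s_def .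
  have h6: "(x^2+1)*B2 x (k+2) = x^4*y^2 + s" using B2_closed[of x "k+2"] unfolding yy2 s2 .
  have "x^2 + 1 > 0" by (simp add: add_nonneg_pos)
  then have "x^2 + 1 \<noteq> 0" by linarith
  then have nz: "(x+1)*(x-1)*(x^2+1) \<noteq> 0" using assms by (simp del: power2_eq_square)
  have "Bt x (k+2) * S1 x (k+2) - B2 x (k+2) - x^2 * B2 x k - x^2 * (Bt x k * S1 x k) = 0"
    using key3_alg[OF h1 h2 h3 h4 h5 h6] nz by simp
  then show ?thesis by linarith
qed

definition R3 :: "int \<Rightarrow> nat \<Rightarrow> int" where
  "R3 x k = (\<Sum>i\<le>k div 2. (if i=0 then 1 else 2) * (x^(2*i) * B2 x (k - 2*i)))"

lemma R3_step: "R3 x (k+2) = B2 x (k+2) + x^2 * (B2 x k + R3 x k)"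
proof -
  have d: "(k+2) div 2 = Suc (k div 2)" by simp
  have "R3 x (k+2) = B2 x (k+2) + (\<Sum>i\<le>k div 2. 2 * (x^(2*Suc i) * B2 x (k + 2 - 2*Suc i)))"
    unfolding R3_def d by (subst sum.atMost_Suc_shift) simp
  also have "(\<Sum>i\<le>k div 2. 2 * (x^(2*Suc i) * B2 x (k + 2 - 2*Suc i)))
      = x^2 * (\<Sum>i\<le>k div 2. 2 * (x^(2*i) * B2 x (k - 2*i)))"
    unfolding sum_distrib_left by (intro sum.cong refl) (simp add: power_add power2_eq_square)
  also have "(\<Sum>i\<le>k div 2. 2 * (x^(2*i) * B2 x (k - 2*i))) = B2 x k + R3 x k"
    unfolding R3_def using sum_c2[where m="k div 2" and h="\<lambda>i. x^(2*i) * B2 x (k - 2*i)"]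
    by (simp add: sum_distrib_left)
  finally show ?thesis .
qed

theorem ident3:
  assumes "x \<ge> 2"
  shows "R3 x k = Bt x k * S1 x k"
proof (induction k rule: less_induct)
  case (less k)
  show ?case
  proof (cases k)
    case 0 then show ?thesis by (simp add: R3_def B2_def Bt_def S1_def)
  next
    case (Suc m)
    show ?thesis
    proof (cases m)
      case 0 then show ?thesis using Suc
        by (simp add: R3_def B2_def Bt_def S1_def power2_eq_square algebra_simps)
    next
      case (Suc j)
      then have kk: "k = j + 2" using \<open>k = Suc m\<close> by simp
      show ?thesis unfolding kk R3_step key3[OF assms] using less.IH[of j] kk by (simp add: ring_distribs)
    qed
  qed
qed



lemma multf_unique:
  assumes f: "multf f" and g: "multf g"
    and pp: "\<And>p k. prime p \<Longrightarrow> k > 0 \<Longrightarrow> f (p ^ k) = g (p ^ k)"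
  shows "n > 0 \<Longrightarrow> f n = g n"
proof (induction n rule: less_induct)
  case (less n)
  show ?case
  proof (cases "n = 1")
    case True then show ?thesis using multf1[OF f] multf1[OF g] by simp
  next
    case False
    then have "n > 1" using less.prems by simp
    then obtain p where p: "prime p" "p dvd n" using prime_factor_nat[of n] by auto
    have nz: "n \<noteq> 0" using less.prems by simp
    have nu: "\<not> is_unit p" using p(1) by auto
    obtain m where m: "n = p ^ multiplicity p n * m" "\<not> p dvd m"
      by (rule multiplicity_decompose'[OF nz nu])
    define k where "k = multiplicity p n"
    have k: "k > 0" unfolding k_def using p less.prems
      using prime_multiplicity_gt_zero_iff[of p n] by simp
    have mpos: "m > 0" using m less.prems by (intro gr0I) auto
    have pk: "p ^ k > 1" using one_less_power[OF prime_gt_1_nat[OF p(1)] k] .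
    have cop: "coprime (p ^ k) m" using p m by (simp add: prime_imp_coprime)
    have mless: "m < n" using m pk mpos unfolding k_def[symmetric] by simp
    have nk: "n = p ^ k * m" using m(1) unfolding k_def .
    have pk0: "p ^ k > 0" using pk by linarith
    have "f n = f (p ^ k) * f m" unfolding nk by (rule multfD[OF f pk0 mpos cop])
    also have "\<dots> = g (p ^ k) * g m" using pp[OF p(1) k] less.IH[OF mless mpos] by simp
    also have "\<dots> = g n" unfolding nk by (rule multfD[OF g pk0 mpos cop, symmetric])
    finally show ?thesis .
  qed
qed


lemma multf_id: "multf (\<lambda>n. int n)" by (simp add: multf_def)
lemma multf_sq: "multf (\<lambda>n. int n ^ 2)" by (simp add: multf_def power_mult_distrib)
lemma multf_one: "multf (\<lambda>n. 1)" by (simp add: multf_def)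
lemma multf_mul: "multf f \<Longrightarrow> multf g \<Longrightarrow> multf (\<lambda>n. f n * g n)"
  unfolding multf_def by (auto simp: algebra_simps)
lemma multf_sqarg: "multf f \<Longrightarrow> multf (\<lambda>n. f (n^2))"
  unfolding multf_def by (auto simp: power_mult_distrib)

lemma multf_liouville: "multf liouville"
  unfolding multf_def liouville_def
  by (auto simp: prime_factorization_mult power_add)

lemma pf_disj:
  fixes a b :: nat
  assumes "coprime a b"
  shows "prime_factors a \<inter> prime_factors b = {}"
proof (rule ccontr)
  assume "prime_factors a \<inter> prime_factors b \<noteq> {}"
  then obtain p where "p \<in> prime_factors a" "p \<in> prime_factors b" by blast
  then have "prime p" "p dvd a" "p dvd b" by (auto simp: in_prime_factors_iff)
  then show False using assms by (metis coprime_common_divisor not_prime_unit)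
qed

lemma card_pf_mult:
  fixes a b :: nat
  assumes "a > 0" "b > 0" "coprime a b"
  shows "card (prime_factors (a*b)) = card (prime_factors a) + card (prime_factors b)"
  using assms pf_disj[OF assms(3)] by (simp add: prime_factors_product card_Un_disjoint)

lemma multf_pow2omega: "multf (\<lambda>n. 2 ^ omega n)"
  unfolding multf_def omega_def by (auto simp: card_pf_mult power_add)

lemma multf_moebius: "multf moebius"
  unfolding multf_def
proof (intro conjI allI impI)
  show "moebius 1 = 1" by (simp add: moebius_def)
next
  fix a b :: nat assume ab: "a > 0" "b > 0" "coprime a b"
  have sq: "squarefree (a*b) \<longleftrightarrow> squarefree a \<and> squarefree b"
    using ab squarefree_multD squarefree_mult_coprime by blast
  show "moebius (a*b) = moebius a * moebius b"
    unfolding moebius_def using sq card_pf_mult[OF ab] by (simp add: power_add)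
qed

lemma beta_dconv: "beta = dconv 1 (\<lambda>n. int n) liouville"
  by (rule ext) (simp add: beta_def dconv_def)
lemma beta2_dconv: "beta2 = dconv 1 (\<lambda>n. int n ^ 2) liouville"
  by (rule ext) (simp add: beta2_def dconv_def)
lemma sigma1_dconv: "sigma1 = dconv 1 (\<lambda>n. int n) (\<lambda>n. 1)"
  by (rule ext) (simp add: sigma1_def dconv_def)
lemma sigma2_dconv: "sigma2 = dconv 1 (\<lambda>n. int n ^ 2) (\<lambda>n. 1)"
  by (rule ext) (simp add: sigma2_def dconv_def)

lemma multf_beta: "multf beta"
  unfolding beta_dconv by (intro dconv_mult multf_id multf_liouville) simp
lemma multf_beta2: "multf beta2"
  unfolding beta2_dconv by (intro dconv_mult multf_sq multf_liouville) simp
lemma multf_sigma1: "multf sigma1"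
  unfolding sigma1_dconv by (intro dconv_mult multf_id multf_one) simp
lemma multf_sigma2: "multf sigma2"
  unfolding sigma2_dconv by (intro dconv_mult multf_sq multf_one) simp

lemma pp_set:
  fixes p :: nat
  assumes p: "prime p" and j: "j > 0"
  shows "{d. d ^ j dvd p ^ k} = (\<lambda>i. p ^ i) ` {i. j*i \<le> k}"
proof
  show "{d. d ^ j dvd p ^ k} \<subseteq> (\<lambda>i. p ^ i) ` {i. j*i \<le> k}"
  proof
    fix d assume "d \<in> {d. d ^ j dvd p ^ k}"
    then have dj: "d ^ j dvd p ^ k" by simp
    then have "d dvd p ^ k" using j pow_dvd_imp_dvd by blast
    then obtain i where i: "i \<le> k" "d = p ^ i" using divides_primepow_nat[OF p] by blast
    then have "p ^ (j*i) dvd p ^ k" using dj by (simp add: power_mult[symmetric] mult.commute)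
    then have "j*i \<le> k" using power_dvd_imp_le prime_gt_1_nat[OF p] by blast
    then show "d \<in> (\<lambda>i. p ^ i) ` {i. j*i \<le> k}" using i by blast
  qed
  show "(\<lambda>i. p ^ i) ` {i. j*i \<le> k} \<subseteq> {d. d ^ j dvd p ^ k}"
    by (auto simp: power_mult[symmetric] mult.commute le_imp_power_dvd)
qed

lemma dconv_pp:
  fixes p :: nat
  assumes p: "prime p" and j: "j > 0"
  shows "dconv j f g (p ^ k) = (\<Sum>i | j*i \<le> k. f (p ^ i) * g (p ^ (k - j*i)))"
proof -
  have inj: "inj_on (\<lambda>i. p ^ i) {i. j*i \<le> k}"
    using prime_gt_1_nat[OF p] by (intro inj_onI) simp
  have "dconv j f g (p ^ k) = (\<Sum>d\<in>(\<lambda>i. p ^ i) ` {i. j*i \<le> k}. f d * g (p ^ k div d ^ j))"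
    unfolding dconv_def pp_set[OF p j] ..
  also have "\<dots> = (\<Sum>i | j*i \<le> k. f (p ^ i) * g (p ^ k div (p ^ i) ^ j))"
    by (subst sum.reindex[OF inj]) simp
  also have "\<dots> = (\<Sum>i | j*i \<le> k. f (p ^ i) * g (p ^ (k - j*i)))"
  proof (intro sum.cong refl)
    fix i assume "i \<in> {i. j*i \<le> k}"
    then have "j*i \<le> k" by simp
    then have "p ^ k div (p ^ i) ^ j = p ^ (k - j*i)"
      using p by (simp add: power_mult[symmetric] mult.commute power_diff prime_gt_0_nat)
    then show "f (p ^ i) * g (p ^ k div (p ^ i) ^ j) = f (p ^ i) * g (p ^ (k - j*i))" by simp
  qed
  finally show ?thesis .
qed

lemma liouville_pp: "prime p \<Longrightarrow> liouville (p ^ i) = (-1) ^ i"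
  by (simp add: liouville_def prime_factorization_prime_power)

lemma pf_pp: "prime (p::nat) \<Longrightarrow> prime_factors (p ^ i) = (if i = 0 then {} else {p})"
  by (simp add: prime_factorization_prime_power)

lemma omega_pp: "prime (p::nat) \<Longrightarrow> (2::int) ^ omega (p ^ i) = (if i = 0 then 1 else 2)"
  by (simp add: omega_def pf_pp)

lemma moebius_pp: "prime (p::nat) \<Longrightarrow> moebius (p ^ i) = (if i = 0 then 1 else if i = 1 then -1 else 0)"
  unfolding moebius_def using squarefree_power_iff[of p i] squarefree_prime[of p]
  by (auto simp: pf_pp prime_prime_factors)


lemma set1: "{i::nat. i \<le> k} = {..k}" by auto
lemma set2: "{i::nat. 2*i \<le> k} = {..k div 2}" by auto

lemma beta_pp: "prime p \<Longrightarrow> beta (p ^ k) = Bt (int p) k"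
  unfolding beta_dconv Bt_def
  by (simp add: dconv_pp set1 liouville_pp)

lemma beta2_pp: "prime p \<Longrightarrow> beta2 (p ^ k) = B2 (int p) k"
  unfolding beta2_dconv B2_def
  by (simp add: dconv_pp set1 liouville_pp power_mult[symmetric] mult.commute)

lemma sigma1_pp: "prime p \<Longrightarrow> sigma1 (p ^ k) = S1 (int p) k"
  unfolding sigma1_dconv S1_def
  by (simp add: dconv_pp set1)

lemma sigma2_pp: "prime p \<Longrightarrow> sigma2 (p ^ k) = S2 (int p) k"
  unfolding sigma2_dconv S2_def
  by (simp add: dconv_pp set1 power_mult[symmetric] mult.commute)

lemma sum_first_two:
  fixes g :: "nat \<Rightarrow> int"
  assumes "\<And>i. i \<ge> 2 \<Longrightarrow> g i = 0"
  shows "(\<Sum>i\<le>Suc m. g i) = g 0 + g 1"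
  using assms by (induction m) simp_all


lemma x_ge2: "prime p \<Longrightarrow> int p \<ge> 2"
  using prime_ge_2_nat by fastforce

lemma part1: "n > 0 \<Longrightarrow> beta n ^ 2 = (\<Sum>d | d dvd n. int d * 2 ^ omega d * liouville d * sigma2 (n div d))"
proof -
  assume n: "n > 0"
  define F where "F = (\<lambda>d. int d * 2 ^ omega d * liouville d)"
  have mF: "multf F" unfolding F_def
    by (intro multf_mul multf_id multf_pow2omega multf_liouville)
  have mL: "multf (\<lambda>n. beta n ^ 2)"
    using multf_mul[OF multf_beta multf_beta] by (simp add: power2_eq_square)
  have mR: "multf (dconv 1 F sigma2)" by (intro dconv_mult mF multf_sigma2) simp
  have "beta n ^ 2 = dconv 1 F sigma2 n"
  proof (rule multf_unique[OF mL mR _ n])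
    fix p k :: nat assume p: "prime p" and k: "k > 0"
    have "dconv 1 F sigma2 (p ^ k) = (\<Sum>i\<le>k. F (p ^ i) * sigma2 (p ^ (k - i)))"
      using dconv_pp[OF p, of 1] by (simp add: set1)
    also have "\<dots> = (\<Sum>i\<le>k. (if i=0 then 1 else 2) * (int p ^ i * (-1)^i * S2 (int p) (k-i)))"
      by (intro sum.cong refl) (simp add: F_def omega_pp[OF p] liouville_pp[OF p] sigma2_pp[OF p])
    also have "\<dots> = Bt (int p) k ^ 2" by (rule ident1[OF x_ge2[OF p]])
    finally show "beta (p ^ k) ^ 2 = dconv 1 F sigma2 (p ^ k)" by (simp add: beta_pp[OF p])
  qed
  then show ?thesis by (simp add: dconv_def F_def)
qed

lemma part2: "n > 0 \<Longrightarrow> beta (n ^ 2) = (\<Sum>d | d dvd n. int d * moebius d * sigma2 (n div d))"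
proof -
  assume n: "n > 0"
  define F where "F = (\<lambda>d. int d * moebius d)"
  have mF: "multf F" unfolding F_def
    by (intro multf_mul multf_id multf_moebius)
  have mL: "multf (\<lambda>n. beta (n ^ 2))" by (rule multf_sqarg[OF multf_beta])
  have mR: "multf (dconv 1 F sigma2)" by (intro dconv_mult mF multf_sigma2) simp
  have "beta (n ^ 2) = dconv 1 F sigma2 n"
  proof (rule multf_unique[OF mL mR _ n])
    fix p k :: nat assume p: "prime p" and k: "k > 0"
    then obtain m where m: "k = Suc m" using gr0_implies_Suc by blast
    have "dconv 1 F sigma2 (p ^ k) = (\<Sum>i\<le>k. F (p ^ i) * sigma2 (p ^ (k - i)))"
      using dconv_pp[OF p, of 1] by (simp add: set1)
    also have "\<dots> = F (p ^ 0) * sigma2 (p ^ (k - 0)) + F (p ^ 1) * sigma2 (p ^ (k - 1))"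
      unfolding m by (rule sum_first_two) (simp add: F_def moebius_pp[OF p])
    also have "\<dots> = S2 (int p) (Suc m) - int p * S2 (int p) m"
    proof -
      have "moebius (p ^ 0) = 1" "moebius (p ^ 1) = -1" using moebius_pp[OF p, of 0] moebius_pp[OF p, of 1] by simp_all
      moreover have "sigma2 (p ^ (k - 0)) = S2 (int p) (Suc m)" "sigma2 (p ^ (k - 1)) = S2 (int p) m"
        using sigma2_pp[OF p, of "Suc m"] sigma2_pp[OF p, of m] m by (simp_all del: power_Suc)
      ultimately show ?thesis unfolding F_def by (simp only: power_0 power_one_right)
    qed
    also have "\<dots> = Bt (int p) (2 * Suc m)" by (rule ident2[OF x_ge2[OF p], symmetric])
    finally have c: "dconv 1 F sigma2 (p ^ k) = Bt (int p) (2 * Suc m)" .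
    have "(p ^ k) ^ 2 = p ^ (2 * Suc m)" unfolding m by (simp only: power_mult[symmetric] mult.commute)
    then have e: "beta ((p ^ k) ^ 2) = Bt (int p) (2 * Suc m)" using beta_pp[OF p] by (simp only:)
    show "beta ((p ^ k) ^ 2) = dconv 1 F sigma2 (p ^ k)" unfolding e c ..
  qed
  then show ?thesis by (simp add: dconv_def F_def)
qed

lemma part3: "n > 0 \<Longrightarrow> beta n * sigma1 n = (\<Sum>d | d ^ 2 dvd n. int d ^ 2 * 2 ^ omega d * beta2 (n div d ^ 2))"
proof -
  assume n: "n > 0"
  define F where "F = (\<lambda>d. int d ^ 2 * 2 ^ omega d)"
  have mF: "multf F" unfolding F_def
    by (intro multf_mul multf_sq multf_pow2omega)
  have mL: "multf (\<lambda>n. beta n * sigma1 n)" by (rule multf_mul[OF multf_beta multf_sigma1])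
  have mR: "multf (dconv 2 F beta2)" by (intro dconv_mult mF multf_beta2) simp
  have "beta n * sigma1 n = dconv 2 F beta2 n"
  proof (rule multf_unique[OF mL mR _ n])
    fix p k :: nat assume p: "prime p" and k: "k > 0"
    have "dconv 2 F beta2 (p ^ k) = (\<Sum>i\<in>{i. 2*i \<le> k}. F (p ^ i) * beta2 (p ^ (k - 2*i)))"
      using dconv_pp[OF p, of 2] by simp
    also have "\<dots> = (\<Sum>i\<le>k div 2. F (p ^ i) * beta2 (p ^ (k - 2*i)))"
      unfolding set2 ..
    also have "\<dots> = R3 (int p) k" unfolding R3_def
      by (intro sum.cong refl) (simp add: F_def omega_pp[OF p] beta2_pp[OF p] power_mult[symmetric] mult.commute)
    also have "\<dots> = Bt (int p) k * S1 (int p) k" by (rule ident3[OF x_ge2[OF p]])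
    finally show "beta (p ^ k) * sigma1 (p ^ k) = dconv 2 F beta2 (p ^ k)"
      by (simp add: beta_pp[OF p] sigma1_pp[OF p])
  qed
  then show ?thesis by (simp add: dconv_def F_def)
qed

theorem mainTheorem15:
  fixes n :: nat
  assumes "n \<ge> 1"
  shows "beta n ^ 2 = (\<Sum>d | d dvd n. int d * 2 ^ omega d * liouville d * sigma2 (n div d)) \<and>
    beta (n ^ 2) = (\<Sum>d | d dvd n. int d * moebius d * sigma2 (n div d)) \<and>
    beta n * sigma1 n = (\<Sum>d | d ^ 2 dvd n. int d ^ 2 * 2 ^ omega d * beta2 (n div d ^ 2))"
  using part1 part2 part3 assms by simp

end
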